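(* Let $m,n,r,d$ be integers with $m,n\ge2$, $d\ge1$, $0<r<\min\{m,n\}$, let $0\le a\le rd$, and for every list of integers $(\rho_1,\dots,\rho_r)$ with $0\le\rho_i\le d$ and $\sum_i\rho_i=a$ let $$\mathcal{A}(\rho_1,\dots,\rho_r)=\Big\{L(\lambda)R(\lambda): L\in\mathbb{C}[\lambda]^{m\times r},\ R\in\mathbb{C}[\lambda]^{r\times n},\ \deg(R_{i*})=\rho_i,\ \deg(L_{*i})=d-\rho_i\ (i=1,\dots,r)\Big\}.$$ Then, for any such list $(\rho_1,\dots,\rho_r)$: (i) if $(\sigma_1,\dots,\sigma_r)$ is any permutation of $(1,\dots,r)$, then $\mathcal{A}(\rho_1,\dots,\rho_r)=\mathcal{A}(\rho_{\sigma_1},\dots,\rho_{\sigma_r})$; (ii) if $\rho_j-\rho_k\ge2$ for some indices $j\ne k$, then $\mathcal{A}(\rho_1,\dots,\rho_r)\subseteq\overline{\mathcal{A}(\rho'_1,\dots,\rho'_r)}$, where $\rho'_j=\rho_j-1$, $\rho'_k=\rho_k+1$ and $\rho'_i=\rho_i$ for $i\ne j,k$; (iii) if $d_R=\lfloor a/r\rfloor$ and $t_R=a\bmod r$, then $\mathcal{A}(\rho_1,\dots,\rho_r)\subseteq\overline{\mathcal{A}(d_R+1,\dots,d_R+1,d_R,\dots,d_R)}$, where $d_R+1$ appears $t_R$ times and $d_R$ appears $r-t_R$ times.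
   Context: Degree of a polynomial vector: maximum degree of entries, $\deg0=-\infty$. $L_{*i}$: $i$th column; $R_{i*}$: $i$th row. Closures are taken in the space $\mathbb{C}[\lambda]^{m\times n}_d$ of complex $m\times n$ polynomial matrices of degree at most $d$, with metric $\mathrm{dist}(P,Q)=(\sum_{i=0}^d\|P_i-Q_i\|_F^2)^{1/2}$, $P_i,Q_i$ the coefficients of $\lambda^i$. *)

theory Defs
  imports "HOL-Analysis.Analysis" "HOL-Computational_Algebra.Polynomial"
begin

text \<open>An m x n polynomial matrix is represented as a function nat => nat => complex poly
  whose entries outside the index range i < m, j < n are 0.\<close>

definition pmat_ok :: "nat \<Rightarrow> nat \<Rightarrow> (nat \<Rightarrow> nat \<Rightarrow> complex poly) \<Rightarrow> bool" where
  "pmat_ok m n P \<longleftrightarrow> (\<forall>i j. \<not> (i < m \<and> j < n) \<longrightarrow> P i j = 0)"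

text \<open>Degree of a polynomial vector of length len: maximum degree of entries;
  None encodes -infinity (the zero vector).\<close>

definition pvec_deg :: "(nat \<Rightarrow> complex poly) \<Rightarrow> nat \<Rightarrow> nat option" where
  "pvec_deg v len = (if \<forall>j<len. v j = 0 then None
     else Some (Max {degree (v j) | j. j < len \<and> v j \<noteq> 0}))"

definition pmat_mult :: "nat \<Rightarrow> nat \<Rightarrow> nat \<Rightarrow> (nat \<Rightarrow> nat \<Rightarrow> complex poly)
    \<Rightarrow> (nat \<Rightarrow> nat \<Rightarrow> complex poly) \<Rightarrow> (nat \<Rightarrow> nat \<Rightarrow> complex poly)" where
  "pmat_mult m r n L R = (\<lambda>i j. if i < m \<and> j < n then (\<Sum>k<r. L i k * R k j) else 0)"

definition setA :: "nat \<Rightarrow> nat \<Rightarrow> nat \<Rightarrow> nat list \<Rightarrow> (nat \<Rightarrow> nat \<Rightarrow> complex poly) set" where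
  "setA m n d \<rho> = {pmat_mult m (length \<rho>) n L R | L R.
      \<forall>i<length \<rho>. pvec_deg (\<lambda>j. R i j) n = Some (\<rho> ! i)
                  \<and> pvec_deg (\<lambda>k. L k i) m = Some (d - \<rho> ! i)}"

definition pm_dist :: "nat \<Rightarrow> nat \<Rightarrow> nat \<Rightarrow> (nat \<Rightarrow> nat \<Rightarrow> complex poly)
    \<Rightarrow> (nat \<Rightarrow> nat \<Rightarrow> complex poly) \<Rightarrow> real" where
  "pm_dist m n d P Q = sqrt (\<Sum>k\<le>d. \<Sum>i<m. \<Sum>j<n. (cmod (coeff (P i j) k - coeff (Q i j) k))\<^sup>2)"

definition pm_closure :: "nat \<Rightarrow> nat \<Rightarrow> nat \<Rightarrow> (nat \<Rightarrow> nat \<Rightarrow> complex poly) set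
    \<Rightarrow> (nat \<Rightarrow> nat \<Rightarrow> complex poly) set" where
  "pm_closure m n d S = {P. pmat_ok m n P \<and> (\<forall>i<m. \<forall>j<n. degree (P i j) \<le> d)
      \<and> (\<forall>e>0. \<exists>Q\<in>S. pm_dist m n d P Q < e)}"

end

theory Submission imports Defs "HOL-Combinatorics.Permutations" begin


lemma pvec_deg_iff:
  "pvec_deg v len = Some D \<longleftrightarrow> (\<forall>j<len. degree (v j) \<le> D) \<and> (\<exists>j<len. coeff (v j) D \<noteq> 0)"
proof (cases "\<forall>j<len. v j = 0")
  case True
  then show ?thesis by (auto simp: pvec_deg_def)
next
  case False
  define S where "S = {degree (v j) | j. j < len \<and> v j \<noteq> 0}"
  have fin: "finite S" unfolding S_def by simp
  have ne: "S \<noteq> {}" using False unfolding S_def by auto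
  have pd: "pvec_deg v len = Some (Max S)" using False unfolding pvec_deg_def S_def by auto
  show ?thesis
  proof
    assume "pvec_deg v len = Some D"
    then have D: "D = Max S" using pd by simp
    have "\<forall>j<len. degree (v j) \<le> D"
    proof (intro allI impI)
      fix j assume "j < len"
      show "degree (v j) \<le> D"
      proof (cases "v j = 0")
        case True then show ?thesis by simp
      next
        case False
        then have "degree (v j) \<in> S" using \<open>j < len\<close> unfolding S_def by auto
        then show ?thesis using D fin by simp
      qed
    qed
    moreover have "Max S \<in> S" using fin ne by (rule Max_in)
    then obtain j where "j < len" "v j \<noteq> 0" "degree (v j) = D" using D unfolding S_def by auto
    then have "coeff (v j) D \<noteq> 0" by (metis leading_coeff_0_iff)
    ultimately show "(\<forall>j<len. degree (v j) \<le> D) \<and> (\<exists>j<len. coeff (v j) D \<noteq> 0)"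
      using \<open>j < len\<close> by blast
  next
    assume A: "(\<forall>j<len. degree (v j) \<le> D) \<and> (\<exists>j<len. coeff (v j) D \<noteq> 0)"
    then obtain j where j: "j < len" "coeff (v j) D \<noteq> 0" by blast
    then have "v j \<noteq> 0" by auto
    have "D \<le> degree (v j)" using j(2) by (rule le_degree)
    then have "degree (v j) = D" using A j(1) by (meson le_antisym)
    then have "D \<in> S" using j(1) \<open>v j \<noteq> 0\<close> unfolding S_def by auto
    moreover have "\<forall>s\<in>S. s \<le> D" using A unfolding S_def by auto
    ultimately have "Max S = D" using fin by (intro Max_eqI) auto
    then show "pvec_deg v len = Some D" using pd by simp
  qed
qed

lemma setA_ok:
  assumes "\<forall>x\<in>set \<rho>. x \<le> d" and "P \<in> setA m n d \<rho>"
  shows "pmat_ok m n P \<and> (\<forall>i<m. \<forall>j<n. degree (P i j) \<le> d)"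
proof -
  obtain L R where P: "P = pmat_mult m (length \<rho>) n L R"
    and h: "\<forall>i<length \<rho>. pvec_deg (\<lambda>j. R i j) n = Some (\<rho> ! i)
                  \<and> pvec_deg (\<lambda>k. L k i) m = Some (d - \<rho> ! i)"
    using assms(2) unfolding setA_def by blast
  have "degree (P i j) \<le> d" if "i < m" "j < n" for i j
  proof -
    have "degree (L i k * R k j) \<le> d" if "k < length \<rho>" for k
    proof -
      have "degree (R k j) \<le> \<rho> ! k" using h that \<open>j < n\<close> by (auto simp: pvec_deg_iff)
      moreover have "degree (L i k) \<le> d - \<rho> ! k" using h that \<open>i < m\<close> by (auto simp: pvec_deg_iff)
      moreover have "\<rho> ! k \<le> d" using assms(1) that by auto
      ultimately show ?thesis using degree_mult_le[of "L i k" "R k j"] by linarith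
    qed
    then show ?thesis unfolding P pmat_mult_def using that by (auto intro: degree_sum_le)
  qed
  moreover have "pmat_ok m n P" unfolding P pmat_mult_def pmat_ok_def by auto
  ultimately show ?thesis by blast
qed

lemma perm_sub:
  assumes "\<sigma> permutes {..<length \<rho>}"
  shows "setA m n d \<rho> \<subseteq> setA m n d (map (\<lambda>i. \<rho> ! \<sigma> i) [0..<length \<rho>])"
proof
  fix P assume "P \<in> setA m n d \<rho>"
  then obtain L R where P: "P = pmat_mult m (length \<rho>) n L R"
    and h: "\<forall>i<length \<rho>. pvec_deg (\<lambda>j. R i j) n = Some (\<rho> ! i)
                  \<and> pvec_deg (\<lambda>k. L k i) m = Some (d - \<rho> ! i)"
    unfolding setA_def by blast
  let ?\<rho> = "map (\<lambda>i. \<rho> ! \<sigma> i) [0..<length \<rho>]"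
  define L' where "L' = (\<lambda>a i. L a (\<sigma> i))"
  define R' where "R' = (\<lambda>i c. R (\<sigma> i) c)"
  have sl: "\<sigma> i < length \<rho>" if "i < length \<rho>" for i
    using assms that by (meson lessThan_iff permutes_in_image)
  have "P = pmat_mult m (length ?\<rho>) n L' R'"
  proof -
    have "(\<Sum>k<length \<rho>. L' a k * R' k c) = (\<Sum>k<length \<rho>. L a k * R k c)" for a c
    proof -
      have "(\<Sum>k<length \<rho>. L a k * R k c) = (\<Sum>k\<in>\<sigma> ` {..<length \<rho>}. L a k * R k c)"
        using assms by (simp add: permutes_image)
      also have "\<dots> = (\<Sum>k<length \<rho>. L a (\<sigma> k) * R (\<sigma> k) c)"
        using assms by (subst sum.reindex) (auto intro: permutes_inj_on)
      finally show ?thesis by (simp add: L'_def R'_def)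
    qed
    then show ?thesis unfolding P pmat_mult_def by (simp add: fun_eq_iff)
  qed
  moreover have "\<forall>i<length ?\<rho>. pvec_deg (\<lambda>j. R' i j) n = Some (?\<rho> ! i)
                  \<and> pvec_deg (\<lambda>k. L' k i) m = Some (d - ?\<rho> ! i)"
    using h sl by (simp add: L'_def R'_def)
  ultimately show "P \<in> setA m n d ?\<rho>" unfolding setA_def by blast
qed

lemma perm_eq:
  assumes "\<sigma> permutes {..<length \<rho>}"
  shows "setA m n d \<rho> = setA m n d (map (\<lambda>i. \<rho> ! \<sigma> i) [0..<length \<rho>])"
proof
  show "setA m n d \<rho> \<subseteq> setA m n d (map (\<lambda>i. \<rho> ! \<sigma> i) [0..<length \<rho>])"
    using assms by (rule perm_sub)
  let ?\<rho> = "map (\<lambda>i. \<rho> ! \<sigma> i) [0..<length \<rho>]"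
  have p2: "inv \<sigma> permutes {..<length ?\<rho>}" using assms by (simp add: permutes_inv)
  have "map (\<lambda>i. ?\<rho> ! inv \<sigma> i) [0..<length ?\<rho>] = \<rho>"
  proof (rule nth_equalityI)
    show "length (map (\<lambda>i. ?\<rho> ! inv \<sigma> i) [0..<length ?\<rho>]) = length \<rho>" by simp
    fix i assume "i < length (map (\<lambda>i. ?\<rho> ! inv \<sigma> i) [0..<length ?\<rho>])"
    then have i: "i < length \<rho>" by simp
    then have "inv \<sigma> i < length \<rho>" using p2 by (metis length_map length_upt minus_nat.diff_0 lessThan_iff permutes_in_image)
    then show "map (\<lambda>i. ?\<rho> ! inv \<sigma> i) [0..<length ?\<rho>] ! i = \<rho> ! i"
      using i assms by (simp add: permutes_inverses(1))
  qed
  then show "setA m n d ?\<rho> \<subseteq> setA m n d \<rho>"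
    using perm_sub[OF p2, of m n d] by simp
qed


lemma pm_dist_L2:
  "pm_dist m n d P Q = L2_set (\<lambda>(k,i,j). cmod (coeff (P i j) k - coeff (Q i j) k)) ({..d} \<times> {..<m} \<times> {..<n})"
proof -
  have "(\<Sum>k\<le>d. \<Sum>i<m. \<Sum>j<n. (cmod (coeff (P i j) k - coeff (Q i j) k))\<^sup>2)
      = (\<Sum>(k,i,j)\<in>{..d} \<times> {..<m} \<times> {..<n}. (cmod (coeff (P i j) k - coeff (Q i j) k))\<^sup>2)"
    by (simp add: sum.cartesian_product)
  then show ?thesis unfolding pm_dist_def L2_set_def
    by (simp add: case_prod_beta)
qed

lemma pm_dist_tri: "pm_dist m n d P R \<le> pm_dist m n d P Q + pm_dist m n d Q R"
proof -
  let ?A = "{..d} \<times> {..<m} \<times> {..<n}"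
  have "pm_dist m n d P R \<le> L2_set (\<lambda>x. (\<lambda>(k,i,j). cmod (coeff (P i j) k - coeff (Q i j) k)) x
        + (\<lambda>(k,i,j). cmod (coeff (Q i j) k - coeff (R i j) k)) x) ?A"
    unfolding pm_dist_L2
  proof (rule L2_set_mono)
    fix x :: "nat \<times> nat \<times> nat"
    obtain k i j where x: "x = (k,i,j)" by (cases x) auto
    have t: "cmod (a - c) \<le> cmod (a - b) + cmod (b - c)" for a b c :: complex
      using norm_triangle_ineq[of "a-b" "b-c"] by simp
    show "(case x of (k, i, j) \<Rightarrow> cmod (coeff (P i j) k - coeff (R i j) k))
         \<le> (case x of (k, i, j) \<Rightarrow> cmod (coeff (P i j) k - coeff (Q i j) k)) +
            (case x of (k, i, j) \<Rightarrow> cmod (coeff (Q i j) k - coeff (R i j) k))"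
      unfolding x using t by simp
    show "0 \<le> (case x of (k, i, j) \<Rightarrow> cmod (coeff (P i j) k - coeff (R i j) k))"
      unfolding x by simp
  qed
  also have "\<dots> \<le> pm_dist m n d P Q + pm_dist m n d Q R"
    unfolding pm_dist_L2 by (rule L2_set_triangle_ineq)
  finally show ?thesis .
qed

lemma pm_dist_self: "pm_dist m n d P P = 0"
  unfolding pm_dist_def by simp

lemma cl_trans:
  assumes "A \<subseteq> pm_closure m n d B" "B \<subseteq> pm_closure m n d C"
  shows "A \<subseteq> pm_closure m n d C"
proof
  fix P assume "P \<in> A"
  then have P: "P \<in> pm_closure m n d B" using assms(1) by (rule subsetD[rotated])
  have P1: "pmat_ok m n P" "\<forall>i<m. \<forall>j<n. degree (P i j) \<le> d"
    and P2: "\<forall>e>0. \<exists>Q\<in>B. pm_dist m n d P Q < e"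
    using P unfolding pm_closure_def mem_Collect_eq by blast+
  have ex: "\<forall>e>0. \<exists>Q'\<in>C. pm_dist m n d P Q' < e"
  proof (intro allI impI)
    fix e :: real assume "e > 0"
    then have e2: "e/2 > 0" by simp
    obtain Q where Q: "Q \<in> B" "pm_dist m n d P Q < e/2" using P2 e2 by blast
    have "Q \<in> pm_closure m n d C" using assms(2) Q(1) by (rule subsetD)
    then have "\<forall>e>0. \<exists>Q'\<in>C. pm_dist m n d Q Q' < e" unfolding pm_closure_def mem_Collect_eq by blast
    then obtain Q' where Q': "Q' \<in> C" "pm_dist m n d Q Q' < e/2" using e2 by blast
    have "pm_dist m n d P Q' < e" using pm_dist_tri[of m n d P Q' Q] Q(2) Q'(2) by linarith
    then show "\<exists>Q'\<in>C. pm_dist m n d P Q' < e" using Q'(1) by blast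
  qed
  show "P \<in> pm_closure m n d C" unfolding pm_closure_def mem_Collect_eq using P1 ex by blast
qed

lemma cl_self:
  assumes "\<forall>x\<in>set \<rho>. x \<le> d"
  shows "setA m n d \<rho> \<subseteq> pm_closure m n d (setA m n d \<rho>)"
proof
  fix P assume P: "P \<in> setA m n d \<rho>"
  have ok: "pmat_ok m n P \<and> (\<forall>i<m. \<forall>j<n. degree (P i j) \<le> d)" by (rule setA_ok[OF assms P])
  have "\<forall>e>0. \<exists>Q\<in>setA m n d \<rho>. pm_dist m n d P Q < e"
    using P by (auto simp only: pm_dist_self intro!: bexI[of _ P])
  then show "P \<in> pm_closure m n d (setA m n d \<rho>)"
    unfolding pm_closure_def mem_Collect_eq using ok by blast
qed

lemma ring_id: "(e::'a::comm_ring_1)*ei = 1 \<Longrightarrow> (X*l + e*b0)*(xh + ei*y) + (bh - ei*l)*(X*y - e*x0) = l*(X*xh + x0) + (X*bh + b0)*y + e*(b0*xh - bh*x0)"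
proof -
  assume h: "e*ei = 1"
  have "(X*l + e*b0)*(xh + ei*y) + (bh - ei*l)*(X*y - e*x0) = X*l*xh + e*b0*xh + (e*ei)*b0*y + bh*X*y - e*bh*x0 + (e*ei)*l*x0"
    by (simp add: algebra_simps)
  also have "\<dots> = l*(X*xh + x0) + (X*bh + b0)*y + e*(b0*xh - bh*x0)" unfolding h by (simp add: algebra_simps)
  finally show ?thesis .
qed
definition Xp :: "complex poly" where "Xp = [:0,1:]"
lemma pc0: "pCons 0 (p::complex poly) = Xp * p" unfolding Xp_def by (simp add: poly_eq_iff coeff_pCons split: nat.split)
lemma smc: "smult c (p::complex poly) = [:c:] * p" by simp
lemma psplit: "f = pCons (coeff f 0) (poly_shift 1 f)"
  by (simp add: poly_eq_iff coeff_poly_shift coeff_pCons split: nat.split)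
lemma deg_shift: "degree f \<le> D + 1 \<Longrightarrow> degree (poly_shift 1 f) \<le> D"
  by (rule degree_le) (auto simp: coeff_poly_shift intro: coeff_eq_0)


lemma step:
  assumes le: "\<forall>x\<in>set \<rho>. x \<le> d" and jk: "j < length \<rho>" "k < length \<rho>" "j \<noteq> k"
    and gap: "\<rho>!j \<ge> \<rho>!k + 2"
  shows "setA m n d \<rho> \<subseteq> pm_closure m n d (setA m n d (\<rho>[j := \<rho>!j - 1, k := \<rho>!k + 1]))"
proof
  fix P assume P0: "P \<in> setA m n d \<rho>"
  obtain L R where P: "P = pmat_mult m (length \<rho>) n L R"
    and h: "\<forall>i<length \<rho>. pvec_deg (\<lambda>j. R i j) n = Some (\<rho> ! i)
                  \<and> pvec_deg (\<lambda>k. L k i) m = Some (d - \<rho> ! i)"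
    using P0 unfolding setA_def by blast
  define p where "p = \<rho>!j"
  define q where "q = \<rho>!k"
  define r where "r = length \<rho>"
  define \<rho>' where "\<rho>' = \<rho>[j := \<rho>!j - 1, k := \<rho>!k + 1]"
  have pd: "p \<le> d" using le jk unfolding p_def by auto
  have pq: "q + 2 \<le> p" using gap unfolding p_def q_def by simp
  have len': "length \<rho>' = r" unfolding \<rho>'_def r_def by simp
  have r'j: "\<rho>'!j = p - 1" unfolding \<rho>'_def p_def using jk by simp
  have r'k: "\<rho>'!k = q + 1" unfolding \<rho>'_def q_def using jk by simp
  have r'i: "\<rho>'!i = \<rho>!i" if "i \<noteq> j" "i \<noteq> k" for i unfolding \<rho>'_def using that by simp
  have Rj: "\<forall>c<n. degree (R j c) \<le> p" "\<exists>c<n. coeff (R j c) p \<noteq> 0"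
    using h jk unfolding p_def pvec_deg_iff by auto
  have Rk: "\<forall>c<n. degree (R k c) \<le> q" "\<exists>c<n. coeff (R k c) q \<noteq> 0"
    using h jk unfolding q_def pvec_deg_iff by auto
  have Lj: "\<forall>a<m. degree (L a j) \<le> d - p" "\<exists>a<m. coeff (L a j) (d - p) \<noteq> 0"
    using h jk unfolding p_def pvec_deg_iff by auto
  have Lk: "\<forall>a<m. degree (L a k) \<le> d - q" "\<exists>a<m. coeff (L a k) (d - q) \<noteq> 0"
    using h jk unfolding q_def pvec_deg_iff by auto
  define xh where "xh c = poly_shift 1 (R j c)" for c
  define x0 where "x0 c = [:coeff (R j c) 0:]" for c
  define bh where "bh a = poly_shift 1 (L a k)" for a
  define b0 where "b0 a = [:coeff (L a k) 0:]" for a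
  define E where "E a c = b0 a * xh c - bh a * x0 c" for a c
  define L' where "L' \<epsilon> a i = (if i = j then pCons 0 (L a j) + smult \<epsilon> (b0 a)
      else if i = k then bh a - smult (1/\<epsilon>) (L a j) else L a i)" for \<epsilon> a i
  define R' where "R' \<epsilon> i c = (if i = j then xh c + smult (1/\<epsilon>) (R k c)
      else if i = k then pCons 0 (R k c) - smult \<epsilon> (x0 c) else R i c)" for \<epsilon> i c
  have xsplit: "R j c = pCons 0 (xh c) + x0 c" for c
    by (subst psplit) (simp add: xh_def x0_def)
  have bsplit: "L a k = pCons 0 (bh a) + b0 a" for a
    by (subst psplit) (simp add: bh_def b0_def)
  have prod: "(\<Sum>i<r. L' \<epsilon> a i * R' \<epsilon> i c) = (\<Sum>i<r. L a i * R i c) + smult \<epsilon> (E a c)"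
    if "\<epsilon> \<noteq> 0" for \<epsilon> a c
  proof -
    have fin: "finite {..<r}" by simp
    have jr: "j \<in> {..<r}" and kr: "k \<in> {..<r} - {j}" using jk unfolding r_def by auto
    have split: "(\<Sum>i<r. g i) = g j + (g k + (\<Sum>i\<in>{..<r} - {j} - {k}. g i))" for g :: "nat \<Rightarrow> complex poly"
      using sum.remove[OF fin jr, of g] sum.remove[OF _ kr, of g] by simp
    have rest: "(\<Sum>i\<in>{..<r} - {j} - {k}. L' \<epsilon> a i * R' \<epsilon> i c) = (\<Sum>i\<in>{..<r} - {j} - {k}. L a i * R i c)"
      by (rule sum.cong) (auto simp: L'_def R'_def)
    have key: "L' \<epsilon> a j * R' \<epsilon> j c + L' \<epsilon> a k * R' \<epsilon> k c = L a j * R j c + L a k * R k c + smult \<epsilon> (E a c)"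
    proof -
      have e: "[:\<epsilon>:] * [:1/\<epsilon>:] = 1" using that by (simp add: one_pCons)
      have "L' \<epsilon> a j * R' \<epsilon> j c + L' \<epsilon> a k * R' \<epsilon> k c = (pCons 0 (L a j) + smult \<epsilon> (b0 a)) * (xh c + smult (1/\<epsilon>) (R k c)) + (bh a - smult (1/\<epsilon>) (L a j)) * (pCons 0 (R k c) - smult \<epsilon> (x0 c))"
        using jk(3) by (simp add: L'_def R'_def)
      also have "\<dots> = L a j * R j c + L a k * R k c + smult \<epsilon> (E a c)"
        by (simp only: pc0 smc xsplit bsplit E_def) (rule ring_id[OF e])
      finally show ?thesis .
    qed
    show ?thesis by (subst (1 2) split) (simp add: rest key algebra_simps)
  qed
  have p1: "p - 1 + 1 = p" "Suc (d - p) = d - (p - 1)" "d - q - 1 + 1 = d - q" "d - (q+1) = d - q - 1"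
    using pq pd by auto
  have degs: "pvec_deg (\<lambda>c. R' \<epsilon> i c) n = Some (\<rho>'!i) \<and> pvec_deg (\<lambda>a. L' \<epsilon> a i) m = Some (d - \<rho>'!i)"
    if "\<epsilon> \<noteq> 0" "i < r" for \<epsilon> i
  proof (cases "i = j")
    case True
    have A: "\<forall>c<n. degree (xh c + smult (1/\<epsilon>) (R k c)) \<le> p - 1"
    proof (intro allI impI)
      fix c assume "c < n"
      have "degree (xh c) \<le> p - 1" unfolding xh_def using Rj(1) \<open>c<n\<close> p1 by (intro deg_shift) auto
      moreover have "degree (smult (1/\<epsilon>) (R k c)) \<le> p - 1"
        using Rk(1) \<open>c<n\<close> pq degree_smult_le[of "1/\<epsilon>" "R k c"] by fastforce
      ultimately show "degree (xh c + smult (1/\<epsilon>) (R k c)) \<le> p - 1" by (rule degree_add_le)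
    qed
    have B: "\<exists>c<n. coeff (xh c + smult (1/\<epsilon>) (R k c)) (p - 1) \<noteq> 0"
    proof -
      obtain c where c: "c < n" "coeff (R j c) p \<noteq> 0" using Rj(2) by blast
      have "coeff (R k c) (p - 1) = 0" using Rk(1) c(1) pq by (intro coeff_eq_0) fastforce
      then show ?thesis using c p1 by (auto simp: xh_def coeff_poly_shift)
    qed
    have C: "\<forall>a<m. degree (pCons 0 (L a j) + smult \<epsilon> (b0 a)) \<le> Suc (d - p)"
    proof (intro allI impI)
      fix a assume "a < m"
      have "degree (pCons 0 (L a j)) \<le> Suc (d - p)" using Lj(1) \<open>a<m\<close>
        by (metis Suc_le_mono degree_pCons_le le_trans)
      moreover have "degree (smult \<epsilon> (b0 a)) \<le> Suc (d - p)" by (simp add: b0_def)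
      ultimately show "degree (pCons 0 (L a j) + smult \<epsilon> (b0 a)) \<le> Suc (d - p)" by (rule degree_add_le)
    qed
    have D: "\<exists>a<m. coeff (pCons 0 (L a j) + smult \<epsilon> (b0 a)) (Suc (d - p)) \<noteq> 0"
      using Lj(2) by (auto simp: b0_def)
    show ?thesis using A B C D True r'j p1 unfolding pvec_deg_iff R'_def L'_def by simp
  next
    case nj: False
    show ?thesis
    proof (cases "i = k")
      case True
      have A: "\<forall>c<n. degree (pCons 0 (R k c) - smult \<epsilon> (x0 c)) \<le> q + 1"
      proof (intro allI impI)
        fix c assume "c < n"
        have "degree (pCons 0 (R k c)) \<le> q + 1" using Rk(1) \<open>c<n\<close>
          by (metis Suc_eq_plus1 Suc_le_mono degree_pCons_le le_trans)
        moreover have "degree (smult \<epsilon> (x0 c)) \<le> q + 1" by (simp add: x0_def)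
        ultimately show "degree (pCons 0 (R k c) - smult \<epsilon> (x0 c)) \<le> q + 1" by (rule degree_diff_le)
      qed
      have B: "\<exists>c<n. coeff (pCons 0 (R k c) - smult \<epsilon> (x0 c)) (q + 1) \<noteq> 0"
        using Rk(2) by (auto simp: x0_def)
      have C: "\<forall>a<m. degree (bh a - smult (1/\<epsilon>) (L a j)) \<le> d - q - 1"
      proof (intro allI impI)
        fix a assume "a < m"
        have "degree (bh a) \<le> d - q - 1" unfolding bh_def using Lk(1) \<open>a<m\<close> p1 by (intro deg_shift) auto
        moreover have "degree (smult (1/\<epsilon>) (L a j)) \<le> d - q - 1"
          using Lj(1) \<open>a<m\<close> pq pd degree_smult_le[of "1/\<epsilon>" "L a j"] by fastforce
        ultimately show "degree (bh a - smult (1/\<epsilon>) (L a j)) \<le> d - q - 1" by (rule degree_diff_le)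
      qed
      have D: "\<exists>a<m. coeff (bh a - smult (1/\<epsilon>) (L a j)) (d - q - 1) \<noteq> 0"
      proof -
        obtain a where a: "a < m" "coeff (L a k) (d - q) \<noteq> 0" using Lk(2) by blast
        have "coeff (L a j) (d - q - 1) = 0" using Lj(1) a(1) pq pd by (intro coeff_eq_0) fastforce
        then show ?thesis using a p1 by (auto simp: bh_def coeff_poly_shift)
      qed
      show ?thesis using A B C D True nj r'k p1 unfolding pvec_deg_iff R'_def L'_def by simp
    next
      case False
      then show ?thesis using h nj that r'i unfolding R'_def L'_def r_def by simp
    qed
  qed
  have inA: "pmat_mult m r n (L' \<epsilon>) (R' \<epsilon>) \<in> setA m n d \<rho>'" if "\<epsilon> \<noteq> 0" for \<epsilon>
    unfolding setA_def len'[symmetric] using degs[OF that] len' by blast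
  define S where "S = (\<Sum>t\<le>d. \<Sum>a<m. \<Sum>c<n. (cmod (coeff (E a c) t))\<^sup>2)"
  have dist: "pm_dist m n d P (pmat_mult m r n (L' \<epsilon>) (R' \<epsilon>)) = cmod \<epsilon> * sqrt S"
    if "\<epsilon> \<noteq> 0" for \<epsilon>
  proof -
    have "(cmod (coeff (P a c) t - coeff (pmat_mult m r n (L' \<epsilon>) (R' \<epsilon>) a c) t))\<^sup>2
        = (cmod \<epsilon>)\<^sup>2 * (cmod (coeff (E a c) t))\<^sup>2" if "a < m" "c < n" for a c t
      using that prod[OF \<open>\<epsilon> \<noteq> 0\<close>, of a c]
      by (simp add: P pmat_mult_def r_def norm_mult power_mult_distrib)
    then have "pm_dist m n d P (pmat_mult m r n (L' \<epsilon>) (R' \<epsilon>)) = sqrt ((cmod \<epsilon>)\<^sup>2 * S)"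
      unfolding pm_dist_def S_def by (simp add: sum_distrib_left)
    then show ?thesis by (simp add: real_sqrt_mult)
  qed
  have "\<exists>Q\<in>setA m n d \<rho>'. pm_dist m n d P Q < e" if "e > 0" for e
  proof -
    define \<epsilon> where "\<epsilon> = complex_of_real (e / (sqrt S + 1))"
    have S0: "sqrt S \<ge> 0" unfolding S_def by (simp add: sum_nonneg)
    have "sqrt S + 1 > 0" using S0 by linarith
    then have epos: "e / (sqrt S + 1) > 0" using \<open>e>0\<close> by (rule divide_pos_pos[rotated])
    then have ep: "cmod \<epsilon> = e / (sqrt S + 1)" unfolding \<epsilon>_def by (simp only: norm_of_real)
    then have "\<epsilon> \<noteq> 0" using epos by auto
    have "cmod \<epsilon> * sqrt S = (e * sqrt S) / (sqrt S + 1)" unfolding ep by simp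
    also have "\<dots> < e" using \<open>sqrt S + 1 > 0\<close> \<open>e>0\<close> by (simp add: pos_divide_less_eq algebra_simps)
    finally have "cmod \<epsilon> * sqrt S < e" .
    then show ?thesis using inA[OF \<open>\<epsilon> \<noteq> 0\<close>] dist[OF \<open>\<epsilon> \<noteq> 0\<close>] by metis
  qed
  moreover have "pmat_ok m n P \<and> (\<forall>i<m. \<forall>j<n. degree (P i j) \<le> d)"
    by (rule setA_ok[OF le P0])
  ultimately show "P \<in> pm_closure m n d (setA m n d \<rho>')"
    unfolding pm_closure_def by blast
qed


lemma upd2_sum:
  fixes f :: "nat \<Rightarrow> nat"
  assumes "j < length xs" "k < length xs" "j \<noteq> k"
  shows "sum_list (map f (xs[j:=u, k:=v])) + f (xs!j) + f (xs!k) = sum_list (map f xs) + f u + f v"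
proof -
  let ?r = "length xs"
  have fin: "finite {..<?r}" by simp
  have jr: "j \<in> {..<?r}" and kr: "k \<in> {..<?r} - {j}" using assms by auto
  have split: "(\<Sum>i<?r. g i) = g j + (g k + (\<Sum>i\<in>{..<?r} - {j} - {k}. g i))" for g :: "nat \<Rightarrow> nat"
    using sum.remove[OF fin jr, of g] sum.remove[OF _ kr, of g] by simp
  have sl: "sum_list (map f ys) = (\<Sum>i<length ys. f (ys!i))" for ys
    by (simp add: sum_list_sum_nth atLeast0LessThan)
  have rest: "(\<Sum>i\<in>{..<?r} - {j} - {k}. f (xs[j:=u, k:=v] ! i)) = (\<Sum>i\<in>{..<?r} - {j} - {k}. f (xs ! i))"
    by (rule sum.cong) auto
  show ?thesis unfolding sl using assms
    by (simp only: length_list_update) (subst (1 2) split, simp add: rest)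
qed

lemma part3:
  fixes T :: "nat list" and a r d :: nat
  assumes "0 < r"
  defines "T \<equiv> replicate (a mod r) (a div r + 1) @ replicate (r - a mod r) (a div r)"
  shows "length \<rho> = r \<Longrightarrow> \<forall>x\<in>set \<rho>. x \<le> d \<Longrightarrow> sum_list \<rho> = a \<Longrightarrow>
    setA m n d \<rho> \<subseteq> pm_closure m n d (setA m n d T)"
proof (induction "sum_list (map (\<lambda>x. x*x) \<rho>)" arbitrary: \<rho> rule: less_induct)
  case less
  show ?case
  proof (cases "\<exists>j k. j < r \<and> k < r \<and> j \<noteq> k \<and> \<rho>!j \<ge> \<rho>!k + 2")
    case True
    then obtain j k where jk: "j < r" "k < r" "j \<noteq> k" "\<rho>!j \<ge> \<rho>!k + 2" by blast
    define \<rho>' where "\<rho>' = \<rho>[j := \<rho>!j - 1, k := \<rho>!k + 1]"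
    have pd: "\<rho>!j \<le> d" using less.prems jk by auto
    have l': "length \<rho>' = r" using less.prems unfolding \<rho>'_def by simp
    have le': "\<forall>x\<in>set \<rho>'. x \<le> d"
    proof
      fix x assume "x \<in> set \<rho>'"
      then have "x \<in> insert (\<rho>!k + 1) (insert (\<rho>!j - 1) (set \<rho>))" unfolding \<rho>'_def
        by (meson set_update_subset_insert insert_mono subsetD)
      moreover have "\<rho>!j - 1 \<le> d" "\<rho>!k + 1 \<le> d" using pd jk(4) by linarith+
      ultimately show "x \<le> d" using less.prems(2) by blast
    qed
    have s': "sum_list \<rho>' = a"
      using upd2_sum[of j \<rho> k id "\<rho>!j - 1" "\<rho>!k + 1"] jk less.prems unfolding \<rho>'_def
      by simp
    obtain t where tq: "\<rho>!j = \<rho>!k + 2 + t" using jk(4) le_Suc_ex by blast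
    have "sum_list (map (\<lambda>x. x*x) \<rho>') + (\<rho>!j)*(\<rho>!j) + (\<rho>!k)*(\<rho>!k)
       = sum_list (map (\<lambda>x. x*x) \<rho>) + (\<rho>!j - 1)*(\<rho>!j - 1) + (\<rho>!k + 1)*(\<rho>!k + 1)"
      using upd2_sum[of j \<rho> k "\<lambda>x. x*x" "\<rho>!j - 1" "\<rho>!k + 1"] jk less.prems unfolding \<rho>'_def
      by simp
    moreover have "(\<rho>!j - 1)*(\<rho>!j - 1) + (\<rho>!k + 1)*(\<rho>!k + 1) < (\<rho>!j)*(\<rho>!j) + (\<rho>!k)*(\<rho>!k)"
      unfolding tq by (simp add: algebra_simps)
    ultimately have lt: "sum_list (map (\<lambda>x. x*x) \<rho>') < sum_list (map (\<lambda>x. x*x) \<rho>)" by linarith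
    have "setA m n d \<rho>' \<subseteq> pm_closure m n d (setA m n d T)"
      using less.hyps[OF lt l' le' s'] .
    moreover have "setA m n d \<rho> \<subseteq> pm_closure m n d (setA m n d \<rho>')"
      unfolding \<rho>'_def using step[of \<rho> d j k m n] less.prems jk by simp
    ultimately show ?thesis by (rule cl_trans[rotated])
  next
    case False
    have ne: "set \<rho> \<noteq> {}" using less.prems \<open>0<r\<close> by auto
    define c where "c = Min (set \<rho>)"
    have cin: "c \<in> set \<rho>" unfolding c_def using ne by simp
    then obtain k where k: "k < r" "\<rho>!k = c" using less.prems by (auto simp: in_set_conv_nth)
    have two: "x = c \<or> x = c + 1" if xs: "x \<in> set \<rho>" for x
    proof -
      obtain j where j: "j < r" "\<rho>!j = x" using xs less.prems by (auto simp: in_set_conv_nth)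
      have "c \<le> x" unfolding c_def using xs by simp
      moreover have "\<not> x \<ge> c + 2"
      proof
        assume hx: "x \<ge> c + 2"
        then have "j \<noteq> k" using j k by auto
        then show False using False j k hx by blast
      qed
      ultimately show ?thesis by linarith
    qed
    define u where "u = count (mset \<rho>) c"
    define t where "t = count (mset \<rho>) (c+1)"
    have M: "mset \<rho> = replicate_mset u c + replicate_mset t (c+1)"
    proof (rule multiset_eqI)
      fix x
      show "count (mset \<rho>) x = count (replicate_mset u c + replicate_mset t (c+1)) x"
      proof (cases "x = c \<or> x = c + 1")
        case True then show ?thesis unfolding u_def t_def by auto
      next
        case False
        then have "x \<notin> set \<rho>" using two by blast
        then have "count (mset \<rho>) x = 0" by (simp add: count_eq_zero_iff)
        then show ?thesis using False by auto
      qed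
    qed
    have "r = u + t" using arg_cong[OF M, of size] less.prems by simp
    moreover have "a = u * c + t * (c+1)" using arg_cong[OF M, of sum_mset] less.prems
      by (simp add: sum_mset_sum_list[symmetric])
    moreover have "u \<ge> 1" unfolding u_def using cin by (simp add: Suc_le_eq)
    ultimately have ar: "a = t + c * r" and tr: "t < r" by (auto simp: algebra_simps)
    have "a div r = c" unfolding ar using tr \<open>0<r\<close> by simp
    moreover have "a mod r = t" unfolding ar using tr by simp
    ultimately have "mset T = mset \<rho>" unfolding T_def M using \<open>r = u + t\<close> by (simp add: add.commute)
    then obtain \<sigma> where \<sigma>: "\<sigma> permutes {..<length \<rho>}" "permute_list \<sigma> \<rho> = T"
      by (rule mset_eq_permutation)
    have "setA m n d \<rho> = setA m n d T"
      using perm_eq[OF \<sigma>(1), of m n d] \<sigma>(2) unfolding permute_list_def by simp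
    then show ?thesis using cl_self[OF less.prems(2), of m n] by simp
  qed
qed

theorem theorem4p5:
  fixes m n r d a :: nat and \<rho> :: "nat list"
  assumes "m \<ge> 2" and "n \<ge> 2" and "d \<ge> 1"
    and "0 < r" and "r < min m n"
    and "a \<le> r * d"
    and "length \<rho> = r" and "\<forall>x\<in>set \<rho>. x \<le> d" and "sum_list \<rho> = a"
  shows "(\<forall>\<sigma>. \<sigma> permutes {..<r} \<longrightarrow>
            setA m n d \<rho> = setA m n d (map (\<lambda>i. \<rho> ! \<sigma> i) [0..<r]))
       \<and> (\<forall>j k. j < r \<and> k < r \<and> j \<noteq> k \<and> \<rho> ! j \<ge> \<rho> ! k + 2 \<longrightarrow>
            setA m n d \<rho> \<subseteq>
              pm_closure m n d (setA m n d (\<rho>[j := \<rho> ! j - 1, k := \<rho> ! k + 1])))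
       \<and> (setA m n d \<rho> \<subseteq>
            pm_closure m n d (setA m n d
              (replicate (a mod r) (a div r + 1) @ replicate (r - a mod r) (a div r))))"
proof (intro conjI allI impI)
  fix \<sigma> assume "\<sigma> permutes {..<r}"
  then show "setA m n d \<rho> = setA m n d (map (\<lambda>i. \<rho> ! \<sigma> i) [0..<r])"
    using perm_eq[of \<sigma> \<rho> m n d] assms(7) by simp
next
  fix j k assume "j < r \<and> k < r \<and> j \<noteq> k \<and> \<rho> ! j \<ge> \<rho> ! k + 2"
  then show "setA m n d \<rho> \<subseteq> pm_closure m n d (setA m n d (\<rho>[j := \<rho> ! j - 1, k := \<rho> ! k + 1]))"
    using step[of \<rho> d j k m n] assms(7,8) by simp
next
  show "setA m n d \<rho> \<subseteq> pm_closure m n d (setA m n d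
              (replicate (a mod r) (a div r + 1) @ replicate (r - a mod r) (a div r)))"
    using part3[OF assms(4) assms(7,8,9)] .
qed

end
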